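(* Let $G$ be an edge-ordered graph with average degree $d$, and suppose there is $0<\varepsilon<1$ such that every set of at most $\varepsilon d$ vertices of $G$ induces at most $(1/2-\varepsilon)d$ edges. Then $G$ has a monotone path of length $\varepsilon d$.
   Context: An edge-ordered graph is a graph together with a total order on its edge set. A path is monotone if its consecutive edges form a monotone sequence in this order; its length is the number of edges. *)

theory Defs
  imports Complex_Main
begin

definition simple_graph :: "'a set \<Rightarrow> 'a set set \<Rightarrow> bool" where
  "simple_graph V E \<longleftrightarrow> finite V \<and> (\<forall>e\<in>E. e \<subseteq> V \<and> card e = 2)"

definition edge_ordered_graph :: "'a set \<Rightarrow> 'a set set \<Rightarrow> ('a set \<times> 'a set) set \<Rightarrow> bool" where
  "edge_ordered_graph V E R \<longleftrightarrow> simple_graph V E \<and> strict_linear_order_on E R"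

definition average_degree :: "'a set \<Rightarrow> 'a set set \<Rightarrow> real" where
  "average_degree V E = 2 * real (card E) / real (card V)"

definition induced_edges :: "'a set set \<Rightarrow> 'a set \<Rightarrow> 'a set set" where
  "induced_edges E S = {e \<in> E. e \<subseteq> S}"

definition path_edges :: "'a list \<Rightarrow> 'a set list" where
  "path_edges xs = map (\<lambda>i. {xs ! i, xs ! (Suc i)}) [0..<length xs - 1]"

definition is_path :: "'a set \<Rightarrow> 'a set set \<Rightarrow> 'a list \<Rightarrow> bool" where
  "is_path V E xs \<longleftrightarrow> xs \<noteq> [] \<and> distinct xs \<and> set xs \<subseteq> V \<and> set (path_edges xs) \<subseteq> E"

definition path_length :: "'a list \<Rightarrow> nat" where
  "path_length xs = length xs - 1"

definition monotone_path :: "'a set \<Rightarrow> 'a set set \<Rightarrow> ('a set \<times> 'a set) set \<Rightarrow> 'a list \<Rightarrow> bool" where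
  "monotone_path V E R xs \<longleftrightarrow> is_path V E xs \<and>
     (sorted_wrt (\<lambda>e f. (e, f) \<in> R) (path_edges xs) \<or> sorted_wrt (\<lambda>e f. (f, e) \<in> R) (path_edges xs))"

end

theory Submission
  imports Defs
begin

lemma ex_sorted_list:
  assumes "finite A" "trans R" "irrefl R" "total_on A R"
  shows "\<exists>xs. set xs = A \<and> distinct xs \<and> sorted_wrt (\<lambda>e f. (e,f) \<in> R) xs"
  using assms
proof (induction A rule: finite_induct)
  case empty
  then show ?case by auto
next
  case (insert a A)
  have tot: "total_on A R" using insert.prems(3) by (auto simp: total_on_def)
  obtain xs where xs: "set xs = A" "distinct xs" "sorted_wrt (\<lambda>e f. (e,f) \<in> R) xs"
    using insert tot by blast
  let ?ys = "filter (\<lambda>e. (e,a) \<in> R) xs @ a # filter (\<lambda>e. (a,e) \<in> R) xs"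
  have tr: "(x,y) \<in> R \<Longrightarrow> (y,z) \<in> R \<Longrightarrow> (x,z) \<in> R" for x y z
    using insert.prems(1) by (meson transD)
  have ir: "(x,x) \<notin> R" for x using insert.prems(2) by (simp add: irrefl_def)
  have "set ?ys = insert a A"
  proof -
    have "e \<in> A \<Longrightarrow> (e,a) \<in> R \<or> (a,e) \<in> R" for e
      using insert.prems(3) insert.hyps(2) by (auto simp: total_on_def)
    then show ?thesis using xs(1) by auto
  qed
  moreover have "distinct ?ys"
    using xs insert.hyps(2) tr ir by (auto simp: distinct_append)
  moreover have "sorted_wrt (\<lambda>e f. (e,f) \<in> R) ?ys"
    using xs(3) tr by (auto simp: sorted_wrt_append sorted_wrt_filter)
  ultimately show ?case by blast
qed

definition edg :: "'a \<times> 'a \<Rightarrow> 'a set" where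
  "edg p = {fst p, snd p}"

definition stp :: "('a \<Rightarrow> 'a list) \<Rightarrow> 'a \<times> 'a \<Rightarrow> ('a \<Rightarrow> 'a list)" where
  "stp \<sigma> p = (if snd p \<notin> set (\<sigma> (fst p)) \<and> fst p \<notin> set (\<sigma> (snd p))
     then \<sigma>(fst p := \<sigma> (snd p) @ [fst p], snd p := \<sigma> (fst p) @ [snd p]) else \<sigma>)"

definition run :: "('a \<times> 'a) list \<Rightarrow> ('a \<Rightarrow> 'a list)" where
  "run ps = foldl stp (\<lambda>x. [x]) ps"

lemma path_edges_snoc:
  assumes "xs \<noteq> []"
  shows "path_edges (xs @ [y]) = path_edges xs @ [{last xs, y}]"
proof -
  obtain n where n: "length xs = Suc n" using assms by (cases xs) auto
  have "path_edges (xs @ [y]) = map (\<lambda>i. {(xs@[y]) ! i, (xs@[y]) ! (Suc i)}) ([0..<n] @ [n])"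
    unfolding path_edges_def using n by simp
  also have "\<dots> = path_edges xs @ [{last xs, y}]"
  proof -
    have "last xs = xs ! n" using n assms by (simp add: last_conv_nth)
    then show ?thesis unfolding path_edges_def using n by (auto simp: nth_append)
  qed
  finally show ?thesis .
qed

lemma sum_split2:
  assumes "finite V" "u \<in> V" "v \<in> V" "u \<noteq> v"
  shows "sum f V = f u + f v + sum f (V - {u,v})"
proof -
  have "sum f V = f u + sum f (V - {u})" using assms by (simp add: sum.remove)
  also have "sum f (V - {u}) = f v + sum f (V - {u} - {v})"
    using assms by (simp add: sum.remove)
  finally show ?thesis by (simp add: Diff_insert2[symmetric] insert_commute add.assoc)
qed

lemma induced_mono:
  assumes "D \<subseteq> D'" "finite D'" "S \<subseteq> S'"
  shows "card (induced_edges D S) \<le> card (induced_edges D' S')"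
  using assms by (intro card_mono) (auto simp: induced_edges_def)

definition gp :: "('a set \<times> 'a set) set \<Rightarrow> 'a set \<Rightarrow> 'a set set \<Rightarrow> 'a list \<Rightarrow> 'a \<Rightarrow> bool" where
  "gp R V D xs x \<longleftrightarrow> xs \<noteq> [] \<and> distinct xs \<and> set xs \<subseteq> V \<and> last xs = x
      \<and> set (path_edges xs) \<subseteq> D \<and> sorted_wrt (\<lambda>e f. (e,f) \<in> R) (path_edges xs)"

lemma gp_mono: "gp R V D xs x \<Longrightarrow> D \<subseteq> D' \<Longrightarrow> gp R V D' xs x"
  unfolding gp_def by auto

lemma gp_ext:
  assumes "gp R V D xs w" "y \<notin> set xs" "y \<in> V" "\<forall>f\<in>D. (f, {w,y}) \<in> R"
  shows "gp R V (insert {w,y} D) (xs @ [y]) y"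
proof -
  have ne: "xs \<noteq> []" and l: "last xs = w" using assms(1) by (auto simp: gp_def)
  have pe: "path_edges (xs @ [y]) = path_edges xs @ [{w,y}]"
    using path_edges_snoc[OF ne] l by simp
  show ?thesis using assms unfolding gp_def pe by (auto simp: sorted_wrt_append)
qed

lemma card_induced_plus:
  assumes "e \<notin> D" "finite D" "e \<subseteq> S'" "S \<subseteq> S'"
  shows "card (induced_edges D S) + 1 \<le> card (induced_edges (insert e D) S')"
proof -
  have sub: "insert e (induced_edges D S) \<subseteq> induced_edges (insert e D) S'"
    using assms by (auto simp: induced_edges_def)
  have f1: "finite (induced_edges (insert e D) S')"
    using assms(2) by (auto simp: induced_edges_def)
  have f2: "finite (induced_edges D S)" using assms(2) by (auto simp: induced_edges_def)
  have ne: "e \<notin> induced_edges D S" using assms(1) by (auto simp: induced_edges_def)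
  have "card (insert e (induced_edges D S)) \<le> card (induced_edges (insert e D) S')"
    by (rule card_mono[OF f1 sub])
  moreover have "card (insert e (induced_edges D S)) = Suc (card (induced_edges D S))"
    by (rule card_insert_disjoint[OF f2 ne])
  ultimately show ?thesis by linarith
qed

lemma run_snoc: "run (ps @ [p]) = stp (run ps) p"
  by (simp add: run_def)

lemma run_inv:
  assumes "trans R" "irrefl R" "finite V"
    and "\<forall>p\<in>set ps. fst p \<noteq> snd p \<and> fst p \<in> V \<and> snd p \<in> V"
    and "distinct (map edg ps)"
    and "sorted_wrt (\<lambda>e f. (e,f) \<in> R) (map edg ps)"
  shows "(\<forall>x\<in>V. gp R V (set (map edg ps)) (run ps x) x)
    \<and> 2 * length ps + (\<Sum>x\<in>V. length (run ps x) - 1)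
       \<le> 2 * (\<Sum>x\<in>V. card (induced_edges (set (map edg ps)) (set (run ps x))))"
  using assms(4-6)
proof (induction ps rule: rev_induct)
  case Nil
  then show ?case by (simp add: run_def path_edges_def gp_def)
next
  case (snoc p ps)
  obtain u v where p: "p = (u,v)" by (cases p)
  define D where "D = set (map edg ps)"
  define e where "e = {u,v}"
  define \<sigma> where "\<sigma> = run ps"
  have uv: "u \<noteq> v" "u \<in> V" "v \<in> V" using snoc.prems(1) p by auto
  have eD: "e \<notin> D" using snoc.prems(2) p by (auto simp: D_def e_def edg_def)
  have lt: "\<forall>f\<in>D. (f,e) \<in> R" using snoc.prems(3) p
    by (auto simp: D_def e_def edg_def sorted_wrt_append)
  have IH: "(\<forall>x\<in>V. gp R V D (\<sigma> x) x)
    \<and> 2 * length ps + (\<Sum>x\<in>V. length (\<sigma> x) - 1)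
       \<le> 2 * (\<Sum>x\<in>V. card (induced_edges D (set (\<sigma> x))))"
    using snoc by (auto simp: D_def \<sigma>_def sorted_wrt_append)
  have D': "set (map edg (ps @ [p])) = insert e D" by (simp add: D_def e_def edg_def p)
  have fD: "finite (insert e D)" by (simp add: D_def)
  have gpx: "gp R V D (\<sigma> x) x" if "x \<in> V" for x using IH that by blast
  have ne: "\<sigma> x \<noteq> []" "x \<in> set (\<sigma> x)" if "x \<in> V" for x
    using gpx[OF that] unfolding gp_def by (blast, metis last_in_set)
  have mono: "card (induced_edges D (set (\<sigma> x))) \<le> card (induced_edges (insert e D) (set (\<sigma> x)))" for x
    by (rule induced_mono) (use fD in auto)
  have fDD: "finite D" by (simp add: D_def)
  show ?case
  proof (cases "v \<notin> set (\<sigma> u) \<and> u \<notin> set (\<sigma> v)")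
    case True
    define \<tau> where "\<tau> = \<sigma>(u := \<sigma> v @ [u], v := \<sigma> u @ [v])"
    have run': "run (ps @ [p]) = \<tau>" using True by (simp add: run_snoc p stp_def \<tau>_def \<sigma>_def)
    have tu: "\<tau> u = \<sigma> v @ [u]" and tv: "\<tau> v = \<sigma> u @ [v]" using uv(1) by (simp_all add: \<tau>_def)
    have tx: "\<tau> x = \<sigma> x" if "x \<noteq> u" "x \<noteq> v" for x using that by (simp add: \<tau>_def)
    have c: "v \<notin> set (\<sigma> u)" "u \<notin> set (\<sigma> v)" using True by auto
    have vu: "{v,u} = e" by (auto simp: e_def)
    have A: "\<forall>x\<in>V. gp R V (insert e D) (\<tau> x) x"
    proof
      fix x assume x: "x \<in> V"
      show "gp R V (insert e D) (\<tau> x) x"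
      proof (cases "x = u \<or> x = v")
        case False
        then show ?thesis using gp_mono[OF gpx[OF x], of "insert e D"] tx by auto
      next
        case True
        have 1: "gp R V (insert e D) (\<sigma> v @ [u]) u"
        proof -
          have "\<forall>f\<in>D. (f,{v,u}) \<in> R" using lt vu by simp
          from gp_ext[OF gpx[OF uv(3)] c(2) uv(2) this] show ?thesis using vu by simp
        qed
        have 2: "gp R V (insert e D) (\<sigma> u @ [v]) v"
          using gp_ext[OF gpx[OF uv(2)] c(1) uv(3)] lt unfolding e_def by simp
        show ?thesis using True 1 2 tu tv by auto
      qed
    qed
    let ?F = "\<lambda>x. card (induced_edges D (set (\<sigma> x)))"
    let ?F' = "\<lambda>x. card (induced_edges (insert e D) (set (\<tau> x)))"
    let ?L = "\<lambda>x. length (\<sigma> x) - 1"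
    let ?L' = "\<lambda>x. length (\<tau> x) - 1"
    have Fu: "?F v + 1 \<le> ?F' u"
      unfolding tu by (rule card_induced_plus[OF eD fDD]) (use ne[OF uv(3)] in \<open>auto simp: e_def\<close>)
    have Fv: "?F u + 1 \<le> ?F' v"
      unfolding tv by (rule card_induced_plus[OF eD fDD]) (use ne[OF uv(2)] in \<open>auto simp: e_def\<close>)
    have Frest: "(\<Sum>x\<in>V-{u,v}. ?F x) \<le> (\<Sum>x\<in>V-{u,v}. ?F' x)"
    proof (rule sum_mono)
      fix x assume "x \<in> V - {u,v}"
      then show "?F x \<le> ?F' x" using tx[of x] mono[of x] by simp
    qed
    have Lu: "?L' u = ?L v + 1" using ne[OF uv(3)] tu by simp
    have Lv: "?L' v = ?L u + 1" using ne[OF uv(2)] tv by simp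
    have Lrest: "(\<Sum>x\<in>V-{u,v}. ?L' x) = (\<Sum>x\<in>V-{u,v}. ?L x)"
      by (rule sum.cong) (use tx in auto)
    have S1: "(\<Sum>x\<in>V. ?F x) = ?F u + ?F v + (\<Sum>x\<in>V-{u,v}. ?F x)"
      using sum_split2[OF assms(3) uv(2,3,1), of "?F"] .
    have S2: "(\<Sum>x\<in>V. ?F' x) = ?F' u + ?F' v + (\<Sum>x\<in>V-{u,v}. ?F' x)"
      using sum_split2[OF assms(3) uv(2,3,1), of "?F'"] .
    have S3: "(\<Sum>x\<in>V. ?L x) = ?L u + ?L v + (\<Sum>x\<in>V-{u,v}. ?L x)"
      using sum_split2[OF assms(3) uv(2,3,1), of "?L"] .
    have S4: "(\<Sum>x\<in>V. ?L' x) = ?L' u + ?L' v + (\<Sum>x\<in>V-{u,v}. ?L' x)"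
      using sum_split2[OF assms(3) uv(2,3,1), of "?L'"] .
    have IH2: "2 * length ps + (\<Sum>x\<in>V. ?L x) \<le> 2 * (\<Sum>x\<in>V. ?F x)" using IH by blast
    have B: "2 * length (ps @ [p]) + (\<Sum>x\<in>V. ?L' x) \<le> 2 * (\<Sum>x\<in>V. ?F' x)"
    proof -
      have "2 * length (ps @ [p]) + (\<Sum>x\<in>V. ?L' x) = 2 * length ps + (\<Sum>x\<in>V. ?L x) + 4"
        unfolding S4 Lu Lv Lrest S3 by simp
      also have "\<dots> \<le> 2 * (\<Sum>x\<in>V. ?F x) + 4" using IH2 by linarith
      also have "\<dots> \<le> 2 * (\<Sum>x\<in>V. ?F' x)" using S1 S2 Fu Fv Frest by linarith
      finally show ?thesis .
    qed
    show ?thesis using A B unfolding run' D' by simp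
  next
    case False
    have run': "run (ps @ [p]) = \<sigma>" using False by (auto simp: run_snoc p stp_def \<sigma>_def)
    have A: "\<forall>x\<in>V. gp R V (insert e D) (\<sigma> x) x"
    proof
      fix x assume "x \<in> V"
      from gp_mono[OF gpx[OF this], of "insert e D"] show "gp R V (insert e D) (\<sigma> x) x" by blast
    qed
    let ?F = "\<lambda>x. card (induced_edges D (set (\<sigma> x)))"
    let ?F' = "\<lambda>x. card (induced_edges (insert e D) (set (\<sigma> x)))"
    have "\<exists>w\<in>V. e \<subseteq> set (\<sigma> w)"
    proof (cases "v \<in> set (\<sigma> u)")
      case True
      then show ?thesis using ne(2)[OF uv(2)] uv(2) by (auto simp: e_def)
    next
      case False
      then have "u \<in> set (\<sigma> v)" using \<open>\<not> (v \<notin> set (\<sigma> u) \<and> u \<notin> set (\<sigma> v))\<close> by blast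
      then show ?thesis using ne(2)[OF uv(3)] uv(3) by (auto simp: e_def)
    qed
    then obtain w where w: "w \<in> V" "e \<subseteq> set (\<sigma> w)" by blast
    have Fw: "?F w + 1 \<le> ?F' w"
      by (rule card_induced_plus[OF eD fDD w(2)]) simp
    have S1: "(\<Sum>x\<in>V. ?F x) = ?F w + (\<Sum>x\<in>V-{w}. ?F x)"
      using w(1) assms(3) by (simp add: sum.remove)
    have S2: "(\<Sum>x\<in>V. ?F' x) = ?F' w + (\<Sum>x\<in>V-{w}. ?F' x)"
      using w(1) assms(3) by (simp add: sum.remove)
    have Frest: "(\<Sum>x\<in>V-{w}. ?F x) \<le> (\<Sum>x\<in>V-{w}. ?F' x)"
      by (rule sum_mono) (rule mono)
    have IH2: "2 * length ps + (\<Sum>x\<in>V. length (\<sigma> x) - 1) \<le> 2 * (\<Sum>x\<in>V. ?F x)" using IH by blast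
    have B: "2 * length (ps @ [p]) + (\<Sum>x\<in>V. length (\<sigma> x) - 1) \<le> 2 * (\<Sum>x\<in>V. ?F' x)"
      using IH2 S1 S2 Frest Fw by simp
    show ?thesis using A B unfolding run' D' by simp
  qed
qed

lemma induced_bound:
  assumes "\<forall>e\<in>E. card e = 2" "finite E" "finite S" "x \<in> S"
  shows "card (induced_edges E S) \<le> card (induced_edges E (S - {x})) + card (S - {x})"
proof -
  have sub: "induced_edges E S \<subseteq> induced_edges E (S - {x}) \<union> (\<lambda>y. {x,y}) ` (S - {x})"
  proof
    fix e assume e: "e \<in> induced_edges E S"
    then have eE: "e \<in> E" and eS: "e \<subseteq> S" by (auto simp: induced_edges_def)
    show "e \<in> induced_edges E (S - {x}) \<union> (\<lambda>y. {x,y}) ` (S - {x})"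
    proof (cases "x \<in> e")
      case False
      then show ?thesis using eE eS by (auto simp: induced_edges_def)
    next
      case True
      obtain a b where ab: "e = {a,b}" "a \<noteq> b" using assms(1) eE by (meson card_2_iff)
      show ?thesis
      proof (cases "x = a")
        case True
        then have "e = {x,b}" "b \<in> S - {x}" using ab eS by auto
        then show ?thesis by blast
      next
        case False
        then have "x = b" using True ab by auto
        then have "e = {x,a}" "a \<in> S - {x}" using ab eS by auto
        then show ?thesis by blast
      qed
    qed
  qed
  have f1: "finite (induced_edges E (S - {x}))" using assms(2) by (auto simp: induced_edges_def)
  have f2: "finite ((\<lambda>y. {x,y}) ` (S - {x}))" using assms(3) by auto
  have "card (induced_edges E S) \<le> card (induced_edges E (S - {x}) \<union> (\<lambda>y. {x,y}) ` (S - {x}))"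
    by (rule card_mono) (use f1 f2 sub in auto)
  also have "\<dots> \<le> card (induced_edges E (S - {x})) + card ((\<lambda>y. {x,y}) ` (S - {x}))"
    by (rule card_Un_le)
  also have "card ((\<lambda>y. {x,y}) ` (S - {x})) \<le> card (S - {x})"
    by (rule card_image_le) (use assms(3) in auto)
  finally show ?thesis by simp
qed

theorem proposition5p1:
  fixes V :: "'a set" and E :: "'a set set" and R :: "('a set \<times> 'a set) set"
    and d \<epsilon> :: real
  assumes "edge_ordered_graph V E R"
    and "V \<noteq> {}"
    and "d = average_degree V E"
    and "0 < \<epsilon>" and "\<epsilon> < 1"
    and "\<forall>S. S \<subseteq> V \<and> real (card S) \<le> \<epsilon> * d \<longrightarrow>
           real (card (induced_edges E S)) \<le> (1/2 - \<epsilon>) * d"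
  shows "\<exists>xs. monotone_path V E R xs \<and> real (path_length xs) \<ge> \<epsilon> * d"
proof -
  have fV: "finite V" and Esub: "\<forall>e\<in>E. e \<subseteq> V \<and> card e = 2"
    and tr: "trans R" and ir: "irrefl R" and tot: "total_on E R"
    using assms(1) unfolding edge_ordered_graph_def simple_graph_def strict_linear_order_on_def by blast+
  have fE: "finite E"
    by (rule finite_subset[of E "Pow V"]) (use Esub fV in auto)
  obtain es where es: "set es = E" "distinct es" "sorted_wrt (\<lambda>e f. (e,f) \<in> R) es"
    using ex_sorted_list[OF fE tr ir tot] by blast
  define pr where "pr e = (SOME p. e = edg p \<and> fst p \<noteq> snd p)" for e :: "'a set"
  have prp: "edg (pr e) = e \<and> fst (pr e) \<noteq> snd (pr e)" if "e \<in> E" for e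
  proof -
    have "card e = 2" using Esub that by blast
    then obtain a b where ab: "e = {a,b}" "a \<noteq> b" unfolding card_2_iff by blast
    then have "\<exists>p. e = edg p \<and> fst p \<noteq> snd p" by (intro exI[of _ "(a,b)"]) (simp add: edg_def)
    from someI_ex[OF this] show ?thesis unfolding pr_def by simp
  qed
  define ps where "ps = map pr es"
  have mp: "map edg ps = es" unfolding ps_def map_map
    by (rule map_idI) (use prp es(1) in auto)
  have cond: "\<forall>p\<in>set ps. fst p \<noteq> snd p \<and> fst p \<in> V \<and> snd p \<in> V"
  proof
    fix p assume "p \<in> set ps"
    then have "p \<in> pr ` set es" by (simp add: ps_def)
    then obtain e where e: "e \<in> E" "p = pr e" using es(1) by blast
    have "edg p = e" "fst p \<noteq> snd p" using prp[OF e(1)] e(2) by auto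
    moreover have "e \<subseteq> V" using Esub e(1) by auto
    ultimately show "fst p \<noteq> snd p \<and> fst p \<in> V \<and> snd p \<in> V" by (auto simp: edg_def)
  qed
  define \<sigma> where "\<sigma> = run ps"
  have inv: "(\<forall>x\<in>V. gp R V E (\<sigma> x) x)
    \<and> 2 * length ps + (\<Sum>x\<in>V. length (\<sigma> x) - 1)
       \<le> 2 * (\<Sum>x\<in>V. card (induced_edges E (set (\<sigma> x))))"
    using run_inv[OF tr ir fV cond] mp es unfolding \<sigma>_def by simp
  have lenps: "length ps = card E" using distinct_card[OF es(2)] es(1) by (simp add: ps_def)
  show ?thesis
  proof (rule ccontr)
    assume no: "\<not> ?thesis"
    let ?F = "\<lambda>x. real (card (induced_edges E (set (\<sigma> x))))"
    let ?L = "\<lambda>x. real (length (\<sigma> x) - 1)"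
    have small: "?L x < \<epsilon> * d" if x: "x \<in> V" for x
    proof -
      have g: "gp R V E (\<sigma> x) x" using inv x by blast
      then have "monotone_path V E R (\<sigma> x)"
        unfolding monotone_path_def is_path_def gp_def by auto
      then show ?thesis using no by (auto simp: path_length_def)
    qed
    have each: "2 * ?F x - ?L x < (1 - \<epsilon>) * d" if x: "x \<in> V" for x
    proof -
      have g: "gp R V E (\<sigma> x) x" using inv x by blast
      define S where "S = set (\<sigma> x)"
      have xS: "x \<in> S" using g unfolding gp_def S_def by (metis last_in_set)
      have SV: "S \<subseteq> V" using g unfolding gp_def S_def by auto
      have cS: "card S = length (\<sigma> x)" using g unfolding gp_def S_def by (simp add: distinct_card)
      have cS0: "card (S - {x}) = length (\<sigma> x) - 1" using cS xS by simp
      have "real (card (S - {x})) \<le> \<epsilon> * d" using small[OF x] cS0 by simp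
      moreover have "S - {x} \<subseteq> V" using SV by blast
      ultimately have h: "real (card (induced_edges E (S - {x}))) \<le> (1/2 - \<epsilon>) * d"
        using spec[OF assms(6), of "S - {x}"] by blast
      have "card (induced_edges E S) \<le> card (induced_edges E (S - {x})) + card (S - {x})"
        by (rule induced_bound) (use Esub fE xS in \<open>auto simp: S_def\<close>)
      then have "?F x \<le> (1/2 - \<epsilon>) * d + ?L x" using h cS0 unfolding S_def by simp
      then show ?thesis using small[OF x] by (simp add: algebra_simps)
    qed
    have "(\<Sum>x\<in>V. 2 * ?F x - ?L x) < (\<Sum>x\<in>V. (1 - \<epsilon>) * d)"
      by (rule sum_strict_mono) (use fV assms(2) each in auto)
    also have "\<dots> = real (card V) * (1 - \<epsilon>) * d" by simp
    finally have lt: "(\<Sum>x\<in>V. 2 * ?F x - ?L x) < real (card V) * (1 - \<epsilon>) * d" .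
    have "real (2 * length ps + (\<Sum>x\<in>V. length (\<sigma> x) - 1))
        \<le> real (2 * (\<Sum>x\<in>V. card (induced_edges E (set (\<sigma> x)))))"
      using inv by (simp only: of_nat_le_iff)
    then have "2 * real (card E) + (\<Sum>x\<in>V. ?L x) \<le> 2 * (\<Sum>x\<in>V. ?F x)"
      using lenps by simp
    then have ge: "2 * real (card E) \<le> (\<Sum>x\<in>V. 2 * ?F x - ?L x)"
      by (simp add: sum_subtractf sum_distrib_left)
    have nV: "real (card V) > 0" using fV assms(2) by (simp add: card_gt_0_iff)
    have dn: "real (card V) * d = 2 * real (card E)"
      using assms(3) nV by (simp add: average_degree_def)
    have d0: "d \<ge> 0" using assms(3) by (simp add: average_degree_def)
    have "real (card V) * d < real (card V) * (1 - \<epsilon>) * d" using ge lt dn by linarith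
    then have "0 < - \<epsilon> * (real (card V) * d)" by (simp add: algebra_simps)
    moreover have "0 \<le> \<epsilon> * (real (card V) * d)" using assms(4) nV d0 by simp
    ultimately show False by linarith
  qed
qed

end
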